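(* Let $\hat f(z)=z+\beta_4z^4+\beta_7z^7+\cdots$ be a $3$-fold symmetric function in $\mathscr{S}^*_\wp$ (equivalently $\hat f(z)=(f(z^3))^{1/3}$ for some $f\in\mathscr{S}^*_\wp$). Then its third Hankel determinant satisfies $|H_3(1)|=|\beta_4|^2\le 1/9$, and the bound is sharp (attained by $\hat f(z)=z\exp\left(\tfrac13(e^{z^3}-1)\right)$).
   Context: $\mathbb{D}$ is the unit disk; $\mathcal{A}$ is the class of analytic $f$ on $\mathbb{D}$ with $f(0)=0,f'(0)=1$, written $f(z)=z+\sum_{k\ge2}b_kz^k$. $f\prec g$ means $f=g\circ\omega$ for analytic $\omega:\mathbb{D}\to\mathbb{D}$, $\omega(0)=0$. $\wp(z)=1+ze^z$, $\mathscr{S}^*_\wp=\{f\in\mathcal{A}:zf'(z)/f(z)\prec\wp(z)\}$. $f$ is $3$-fold symmetric if $f(e^{2\pi i/3}z)=e^{2\pi i/3}f(z)$ for all $z\in\mathbb{D}$. The third Hankel determinant is $H_3(1)=\det\begin{pmatrix}1&b_2&b_3\\ b_2&b_3&b_4\\ b_3&b_4&b_5\end{pmatrix}$, which for a $3$-fold symmetric function equals $-b_4^2$. *)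

theory Defs
  imports "HOL-Analysis.Analysis"
begin

abbreviation unit_disk :: "complex set" where
  "unit_disk \<equiv> ball 0 1"

definition coef :: "(complex \<Rightarrow> complex) \<Rightarrow> nat \<Rightarrow> complex" where
  "coef f k = (deriv ^^ k) f 0 / of_nat (fact k)"

definition classA :: "(complex \<Rightarrow> complex) \<Rightarrow> bool" where
  "classA f \<longleftrightarrow> f holomorphic_on unit_disk \<and> f 0 = 0 \<and> deriv f 0 = 1"

definition subordinate :: "(complex \<Rightarrow> complex) \<Rightarrow> (complex \<Rightarrow> complex) \<Rightarrow> bool" where
  "subordinate f g \<longleftrightarrow>
     (\<exists>w. w holomorphic_on unit_disk \<and> w ` unit_disk \<subseteq> unit_disk \<and> w 0 = 0 \<and>
          (\<forall>z\<in>unit_disk. f z = g (w z)))"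

definition wp :: "complex \<Rightarrow> complex" where
  "wp z = 1 + z * exp z"

text \<open>S*_wp. The quotient z f'(z)/f(z) has a removable singularity at 0 with value 1;
  we use that value there.\<close>
definition starlike_wp :: "(complex \<Rightarrow> complex) \<Rightarrow> bool" where
  "starlike_wp f \<longleftrightarrow> classA f \<and>
     subordinate (\<lambda>z. if z = 0 then 1 else z * deriv f z / f z) wp"

definition threefold_symmetric :: "(complex \<Rightarrow> complex) \<Rightarrow> bool" where
  "threefold_symmetric f \<longleftrightarrow>
     (\<forall>z\<in>unit_disk. f (exp (2 * pi * \<i> / 3) * z) = exp (2 * pi * \<i> / 3) * f z)"

text \<open>Third Hankel determinant H_3(1) = det [[1,b2,b3],[b2,b3,b4],[b3,b4,b5]], expanded.\<close>
definition hankel3 :: "(complex \<Rightarrow> complex) \<Rightarrow> complex" where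
  "hankel3 f = (let b2 = coef f 2; b3 = coef f 3; b4 = coef f 4; b5 = coef f 5 in
      1 * (b3 * b5 - b4 * b4) - b2 * (b2 * b5 - b4 * b3) + b3 * (b2 * b4 - b3 * b3))"

end

theory Submission imports Defs "HOL-Complex_Analysis.Complex_Analysis" begin

definition om :: complex where "om = exp (2 * pi * \<i> / 3)"

lemma om3: "om ^ 3 = 1"
proof -
  have "om ^ 3 = exp (of_nat 3 * (2 * pi * \<i> / 3))" unfolding om_def by (simp only: exp_of_nat_mult)
  also have "\<dots> = exp (2 * of_real pi * \<i>)" by (rule arg_cong[where f=exp]) simp
  also have "\<dots> = 1" by (rule exp_two_pi_i)
  finally show ?thesis .
qed

lemma om_ne1: "om \<noteq> 1"
proof
  assume "om = 1"
  then obtain n :: int where "Im (2 * pi * \<i> / 3) = 2 * pi * n" unfolding om_def exp_eq_1 by auto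
  hence "1 / 3 = (real_of_int n)" by (simp add: field_simps)
  hence "1 = 3 * real_of_int n" by simp
  hence "1 = 3 * n" by linarith
  thus False by presburger
qed

lemma om_norm: "norm om = 1" unfolding om_def by (simp add: norm_exp_eq_Re)

lemma sym_deriv:
  assumes hf: "f holomorphic_on unit_disk" and sym: "threefold_symmetric f"
  shows "om ^ k * (deriv ^^ k) f 0 = om * (deriv ^^ k) f 0"
proof -
  have o: "open unit_disk" "(0::complex) \<in> unit_disk" by auto
  have in_d: "om * w \<in> unit_disk" if "w \<in> unit_disk" for w
    using that by (simp add: norm_mult om_norm)
  have "(deriv ^^ k) (\<lambda>w. f (om * w)) 0 = om ^ k * (deriv ^^ k) f (om * 0)"
    by (rule higher_deriv_compose_linear[OF hf o(1) o(1) o(2) in_d])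
  moreover have "(deriv ^^ k) (\<lambda>w. f (om * w)) 0 = (deriv ^^ k) (\<lambda>w. om * f w) 0"
  proof (rule higher_deriv_cong_ev[OF _ refl])
    have "eventually (\<lambda>z. z \<in> unit_disk) (nhds (0::complex))"
      by (intro eventually_nhds_in_open) auto
    thus "eventually (\<lambda>w. f (om * w) = om * f w) (nhds 0)"
      by eventually_elim (use sym in \<open>auto simp: threefold_symmetric_def om_def\<close>)
  qed
  moreover have "(deriv ^^ k) (\<lambda>w. om * f w) 0 = om * (deriv ^^ k) f 0"
    by (rule higher_deriv_cmult[OF hf o(2) o(1)])
  ultimately show ?thesis by (metis mult_zero_right)
qed

lemma sym_coef:
  assumes hf: "f holomorphic_on unit_disk" and sym: "threefold_symmetric f"
  shows "coef f 2 = 0" "coef f 3 = 0" "coef f 5 = 0"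
proof -
  have ne: "om \<noteq> 0" unfolding om_def by simp
  have a: "(om ^ k - om) * (deriv ^^ k) f 0 = 0" for k
    using sym_deriv[OF hf sym, of k] by (simp add: algebra_simps)
  have "om ^ 2 \<noteq> om" using ne om_ne1 by (simp add: power2_eq_square)
  hence "(deriv ^^ 2) f 0 = 0" using a[of 2] by simp
  thus "coef f 2 = 0" by (simp add: coef_def)
  have "om ^ 3 \<noteq> om" using om3 om_ne1 by simp
  hence "(deriv ^^ 3) f 0 = 0" using a[of 3] by simp
  thus "coef f 3 = 0" by (simp add: coef_def)
  have "om ^ 5 = om ^ 3 * om ^ 2" by (simp add: power_add[symmetric])
  hence "om ^ 5 = om ^ 2" using om3 by simp
  hence "om ^ 5 \<noteq> om" using ne om_ne1 by (simp add: power2_eq_square)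
  hence "(deriv ^^ 5) f 0 = 0" using a[of 5] by simp
  thus "coef f 5 = 0" by (simp add: coef_def)
qed

lemma schwarz3:
  assumes hw: "w holomorphic_on unit_disk" and wd: "w ` unit_disk \<subseteq> unit_disk"
  shows "norm ((deriv ^^ 3) w 0) \<le> 6"
proof -
  have b: "norm ((deriv ^^ 3) w 0) \<le> 6 / r ^ 3" if r: "0 < r" "r < 1" for r :: real
  proof -
    have "norm ((deriv ^^ 3) w 0) \<le> fact 3 * 1 / r ^ 3"
    proof (rule Cauchy_inequality)
      show "w holomorphic_on ball 0 r" by (rule holomorphic_on_subset[OF hw]) (use r in auto)
      show "continuous_on (cball 0 r) w"
        by (rule continuous_on_subset[OF holomorphic_on_imp_continuous_on[OF hw]]) (use r in auto)
      show "norm (w x) \<le> 1" if "norm (0 - x) = r" for x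
      proof -
        have "x \<in> unit_disk" using that r by simp
        hence "w x \<in> unit_disk" using wd by blast
        thus ?thesis by simp
      qed
    qed (use r in auto)
    thus ?thesis by (simp add: fact_numeral)
  qed
  have "((\<lambda>r::real. 6 / r ^ 3) \<longlongrightarrow> 6 / 1 ^ 3) (at_left 1)"
    by (intro tendsto_intros) auto
  hence lim: "((\<lambda>r::real. 6 / r ^ 3) \<longlongrightarrow> 6) (at_left 1)" by simp
  have ev: "eventually (\<lambda>r::real. 0 < r \<and> r < 1) (at_left 1)"
    using eventually_at_left_real[of 0 1] by simp
  show ?thesis
    by (rule tendsto_le[OF _ lim tendsto_const]) (auto intro: eventually_mono[OF ev] b)
qed

lemma nz_near0:
  assumes hf: "f holomorphic_on unit_disk" and f0: "f 0 = 0" and f1: "deriv f 0 = 1"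
  shows "eventually (\<lambda>z. z \<noteq> 0 \<longrightarrow> f z \<noteq> 0) (nhds 0)"
proof -
  have "f field_differentiable at 0" using hf
    by (meson holomorphic_on_imp_differentiable_at open_ball centre_in_ball zero_less_one)
  hence "(f has_field_derivative 1) (at 0)" using f1 by (metis DERIV_deriv_iff_field_differentiable)
  hence "((\<lambda>y. (f y - f 0) / (y - 0)) \<longlongrightarrow> 1) (at 0)"
    by (simp add: has_field_derivative_iff)
  hence "eventually (\<lambda>y. (f y - f 0) / (y - 0) \<noteq> 0) (at 0)"
    by (rule tendsto_imp_eventually_ne) simp
  hence "eventually (\<lambda>y. f y \<noteq> 0) (at 0)" by (rule eventually_mono) (auto simp: f0)
  thus ?thesis by (simp add: eventually_at_filter)
qed

lemma coef_fps: "f holomorphic_on unit_disk \<Longrightarrow> coef f n = fps_nth (fps_expansion f 0) n"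
  by (simp add: coef_def fps_expansion_def)

lemma key:
  assumes hf: "f holomorphic_on unit_disk" and hw: "w holomorphic_on unit_disk"
    and f0: "f 0 = 0" and f1: "deriv f 0 = 1" and w0: "w 0 = 0"
    and c2: "coef f 2 = 0" and c3: "coef f 3 = 0"
    and ev: "eventually (\<lambda>z. z * deriv f z = f z * (1 + w z * exp (w z))) (nhds 0)"
  shows "3 * coef f 4 = fps_nth (fps_expansion w 0) 3"
proof -
  define F where "F = fps_expansion f 0"
  define W where "W = fps_expansion w 0"
  define E where "E = fps_expansion (\<lambda>z. exp (w z)) 0"
  have o: "open unit_disk" "(0::complex) \<in> unit_disk" by auto
  have hF: "f has_fps_expansion F" unfolding F_def using hf o by blast
  have hW: "w has_fps_expansion W" unfolding W_def using hw o by blast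
  have he: "(\<lambda>z. exp (w z)) holomorphic_on unit_disk" using hw by (intro holomorphic_intros)
  have hE: "(\<lambda>z. exp (w z)) has_fps_expansion E" unfolding E_def using he o by blast
  have L: "(\<lambda>z. z * deriv f z) has_fps_expansion fps_X * fps_deriv F"
    by (intro has_fps_expansion_mult has_fps_expansion_fps_X has_fps_expansion_deriv hF)
  have R: "(\<lambda>z. f z * (1 + w z * exp (w z))) has_fps_expansion F * (1 + W * E)"
    by (intro has_fps_expansion_mult has_fps_expansion_add has_fps_expansion_1 hF hW hE)
  have L': "(\<lambda>z. f z * (1 + w z * exp (w z))) has_fps_expansion fps_X * fps_deriv F"
    using L has_fps_expansion_cong[OF ev refl] by blast
  have eq: "fps_X * fps_deriv F = F * (1 + W * E)"
    using fps_expansion_unique_complex[OF L' R] .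
  have F0: "F $ 0 = 0" using has_fps_expansion_imp_0_eq_fps_nth_0[OF hF] f0 by simp
  have F1: "F $ 1 = 1" using f1 by (simp add: F_def fps_expansion_def)
  have F2: "F $ 2 = 0" using c2 hf by (simp add: coef_fps F_def)
  have F3: "F $ 3 = 0" using c3 hf by (simp add: coef_fps F_def)
  have W0: "W $ 0 = 0" using has_fps_expansion_imp_0_eq_fps_nth_0[OF hW] w0 by simp
  have E0: "E $ 0 = 1" using has_fps_expansion_imp_0_eq_fps_nth_0[OF hE] w0 by simp
  have e2: "(fps_X * fps_deriv F) $ 2 = (F * (1 + W * E)) $ 2" using eq by simp
  have e3: "(fps_X * fps_deriv F) $ 3 = (F * (1 + W * E)) $ 3" using eq by simp
  have e4: "(fps_X * fps_deriv F) $ 4 = (F * (1 + W * E)) $ 4" using eq by simp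
  have W1: "W $ 1 = 0" using e2 F0 F1 F2 W0 E0
    by (simp add: fps_mult_nth numeral_eq_Suc)
  have W2: "W $ 2 = 0" using e3 F0 F1 F2 F3 W0 E0 W1
    by (simp add: fps_mult_nth numeral_eq_Suc)
  show ?thesis using e4 F0 F1 F2 F3 W0 E0 W1 W2
    by (simp add: fps_mult_nth numeral_eq_Suc coef_fps[OF hf] F_def[symmetric] W_def[symmetric])
qed
lemma part1:
  assumes st: "starlike_wp f" and sym: "threefold_symmetric f"
  shows "norm (hankel3 f) = (norm (coef f 4))^2 \<and> norm (hankel3 f) \<le> 1/9"
proof -
  from st have hf: "f holomorphic_on unit_disk" and f0: "f 0 = 0" and f1: "deriv f 0 = 1"
    by (auto simp: starlike_wp_def classA_def)
  from st obtain w where hw: "w holomorphic_on unit_disk" and wd: "w ` unit_disk \<subseteq> unit_disk"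
    and w0: "w 0 = 0"
    and sub: "\<And>z. z \<in> unit_disk \<Longrightarrow> (if z = 0 then 1 else z * deriv f z / f z) = wp (w z)"
    by (auto simp: starlike_wp_def subordinate_def)
  note c = sym_coef[OF hf sym]
  have evd: "eventually (\<lambda>z. z \<in> unit_disk) (nhds (0::complex))"
    by (intro eventually_nhds_in_open) auto
  have ev: "eventually (\<lambda>z. z * deriv f z = f z * (1 + w z * exp (w z))) (nhds 0)"
    using evd nz_near0[OF hf f0 f1]
  proof eventually_elim
    case (elim z)
    show ?case
    proof (cases "z = 0")
      case True thus ?thesis using f0 by simp
    next
      case False
      hence "z * deriv f z / f z = 1 + w z * exp (w z)" and "f z \<noteq> 0"
        using sub[OF elim(1)] elim(2) by (auto simp: wp_def)
      thus ?thesis by (simp add: field_simps)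
    qed
  qed
  have k: "3 * coef f 4 = fps_nth (fps_expansion w 0) 3" by (rule key[OF hf hw f0 f1 w0 c(1) c(2) ev])
  have "norm (fps_nth (fps_expansion w 0) 3) = norm ((deriv ^^ 3) w 0) / 6"
    by (simp add: fps_expansion_def norm_divide fact_numeral)
  also have "\<dots> \<le> 1" using schwarz3[OF hw wd] by simp
  finally have "norm (3 * coef f 4) \<le> 1" using k by simp
  hence b4: "norm (coef f 4) \<le> 1/3" by (simp add: norm_mult)
  have h: "hankel3 f = - (coef f 4 * coef f 4)" using c by (simp add: hankel3_def Let_def)
  have hn: "norm (hankel3 f) = (norm (coef f 4))^2" by (simp add: h norm_mult power2_eq_square)
  have "(norm (coef f 4))^2 \<le> (1/3)^2" by (rule power_mono[OF b4]) simp
  thus ?thesis using hn by (simp add: power2_eq_square)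
qed

definition f0 :: "complex \<Rightarrow> complex" where "f0 z = z * exp ((exp (z^3) - 1) / 3)"

lemma f0_deriv: "(f0 has_field_derivative
   (exp ((exp (z^3) - 1) / 3) + z * (exp ((exp (z^3) - 1) / 3) * (exp (z^3) * (3 * z^2) / 3)))) (at z)"
  unfolding f0_def[abs_def]
  by (rule derivative_eq_intros refl | simp)+

lemma f0_deriv_eq: "deriv f0 z = exp ((exp (z^3) - 1) / 3) + z * (exp ((exp (z^3) - 1) / 3) * (exp (z^3) * (3 * z^2) / 3))"
  by (rule DERIV_imp_deriv[OF f0_deriv])

lemma f0_rel: "z * deriv f0 z = f0 z * (1 + z^3 * exp (z^3))"
  unfolding f0_deriv_eq f0_def by (simp add: algebra_simps power2_eq_square power3_eq_cube)

lemma f0_holo: "f0 holomorphic_on unit_disk"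
  unfolding f0_def[abs_def] by (intro holomorphic_intros) auto

lemma f0_starlike: "starlike_wp f0"
  unfolding starlike_wp_def classA_def subordinate_def
proof (intro conjI exI[of _ "\<lambda>z. z^3"] f0_holo ballI)
  show "f0 0 = 0" by (simp add: f0_def)
  show "deriv f0 0 = 1" by (simp add: f0_deriv_eq)
  show "(\<lambda>z. z^3) holomorphic_on unit_disk" by (intro holomorphic_intros)
  show "(\<lambda>z. z^3) ` unit_disk \<subseteq> unit_disk"
  proof
    fix y assume "y \<in> (\<lambda>z::complex. z^3) ` unit_disk"
    then obtain z :: complex where z: "norm z < 1" "y = z^3" by auto
    have "norm z ^ 3 < 1" using z by (simp add: power_less_one_iff)
    thus "y \<in> unit_disk" using z by (simp add: norm_power)
  qed
  show "(0::complex) ^ 3 = 0" by simp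
  fix z :: complex assume "z \<in> unit_disk"
  show "(if z = 0 then 1 else z * deriv f0 z / f0 z) = wp (z ^ 3)"
  proof (cases "z = 0")
    case True thus ?thesis by (simp add: wp_def)
  next
    case False
    hence "f0 z \<noteq> 0" by (simp add: f0_def)
    thus ?thesis using False f0_rel[of z] by (simp add: wp_def field_simps)
  qed
qed

lemma f0_sym: "threefold_symmetric f0"
  unfolding threefold_symmetric_def om_def[symmetric]
proof
  fix z :: complex
  have "(om * z)^3 = z^3" using om3 by (simp add: power_mult_distrib)
  thus "f0 (om * z) = om * f0 z" by (simp add: f0_def)
qed

lemma f0_hankel: "norm (hankel3 f0) = 1/9"
proof -
  note c = sym_coef[OF f0_holo f0_sym]
  have ev: "eventually (\<lambda>z. z * deriv f0 z = f0 z * (1 + z^3 * exp (z^3))) (nhds 0)"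
    by (simp add: f0_rel)
  have k: "3 * coef f0 4 = fps_nth (fps_expansion (\<lambda>z. z^3) 0) 3"
    by (rule key[OF f0_holo _ _ _ _ c(1) c(2) ev])
       (auto intro: holomorphic_intros simp: f0_def f0_deriv_eq)
  have "(\<lambda>z::complex. z^3) has_fps_expansion fps_X ^ 3"
    by (intro has_fps_expansion_power has_fps_expansion_fps_X)
  hence "fps_expansion (\<lambda>z::complex. z^3) 0 = fps_X ^ 3" by (rule fps_expansion_eqI)
  hence "3 * coef f0 4 = 1" using k by simp
  hence b: "coef f0 4 = 1/3" by (simp add: eq_divide_eq mult.commute)
  have h: "hankel3 f0 = - (coef f0 4 * coef f0 4)" using c by (simp add: hankel3_def Let_def)
  show ?thesis unfolding h b by (simp add: norm_divide)
qed

theorem mainTheorem18: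
  shows "(\<forall>f. starlike_wp f \<and> threefold_symmetric f \<longrightarrow>
            norm (hankel3 f) = (norm (coef f 4))^2 \<and> norm (hankel3 f) \<le> 1/9)
       \<and> (let f0 = (\<lambda>z::complex. z * exp ((exp (z^3) - 1) / 3)) in
            starlike_wp f0 \<and> threefold_symmetric f0 \<and> norm (hankel3 f0) = 1/9)"
proof -
  have e: "(\<lambda>z::complex. z * exp ((exp (z^3) - 1) / 3)) = f0" by (simp add: f0_def[abs_def])
  show ?thesis unfolding Let_def e using part1 f0_starlike f0_sym f0_hankel by blast
qed

end
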